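(* Let $E>0$ and $0<\delta_0<1$. There exists an integer $\ell_0=\ell_0(E,\delta_0)$ such that for every $v\in\mathcal{X}^1$ with $E(v)\le E$, either $\big|1-|v(x)|\big|<\delta_0$ for all $x\in\mathbb{R}$, or there exist $\ell\le\ell_0$ points $x_1,\dots,x_\ell$ such that $\big|1-|v(x_i)|\big|\ge\delta_0$ for all $1\le i\le\ell$ and $\big|1-|v(x)|\big|\le\delta_0$ for all $x\in\mathbb{R}\setminus\bigcup_{i=1}^\ell[x_i-1,x_i+1]$.
   Context: $\mathcal{X}^1=\{w\in L^\infty(\mathbb{R};\mathbb{C}):\ w'\in L^2,\ 1-|w|^2\in L^2\}$. $E(v)=\frac12\int_\mathbb{R}|v'|^2+\frac14\int_\mathbb{R}(1-|v|^2)^2$. *)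

theory Defs
  imports "HOL-Analysis.Analysis"
begin

text \<open>The space X^1, for the continuous representative v of w, with g the
(weak) derivative of v: v is bounded, v(y) - v(x) = integral of g over [x,y],
g is in L^2, and 1 - |v|^2 is in L^2.\<close>
definition in_X1 :: "(real \<Rightarrow> complex) \<Rightarrow> (real \<Rightarrow> complex) \<Rightarrow> bool" where
  "in_X1 v g \<longleftrightarrow>
     continuous_on UNIV v \<and> bounded (range v) \<and>
     g \<in> borel_measurable lborel \<and>
     integrable lborel (\<lambda>t. (cmod (g t))\<^sup>2) \<and>
     (\<forall>x y. x \<le> y \<longrightarrow> v y - v x = (LBINT t=x..y. g t)) \<and>
     integrable lborel (\<lambda>x. (1 - (cmod (v x))\<^sup>2)\<^sup>2)"

definition GL_energy :: "(real \<Rightarrow> complex) \<Rightarrow> (real \<Rightarrow> complex) \<Rightarrow> real" where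
  "GL_energy v g = 1/2 * (\<integral>t. (cmod (g t))\<^sup>2 \<partial>lborel)
                  + 1/4 * (\<integral>x. (1 - (cmod (v x))\<^sup>2)\<^sup>2 \<partial>lborel)"

end

theory Submission
  imports Defs
begin

lemma cont_bound:
  assumes X: "in_X1 v g" and K: "(\<integral>t. (cmod (g t))\<^sup>2 \<partial>lborel) \<le> K"
    and a: "a > 0" and xy: "x \<le> y"
  shows "cmod (v y - v x) \<le> K/(2*a) + a/2*(y-x)"
proof -
  have gm: "g \<in> borel_measurable lborel" and gi: "integrable lborel (\<lambda>t. (cmod (g t))\<^sup>2)"
    and eq: "v y - v x = (LBINT t=x..y. g t)"
    using X xy unfolding in_X1_def by auto
  let ?A = "{x<..<y}"
  have eq2: "v y - v x = (\<integral>t. indicator ?A t *\<^sub>R g t \<partial>lborel)"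
    using eq xy by (simp add: interval_lebesgue_integral_def set_lebesgue_integral_def)
  have iA: "integrable lborel (\<lambda>t. indicator ?A t :: real)"
    using xy by (simp add: integrable_indicator_iff emeasure_lborel_Ioo)
  have ib: "integrable lborel (\<lambda>t. (cmod (g t))\<^sup>2 / (2*a) + a/2 * indicator ?A t)"
    using gi iA by (intro Bochner_Integration.integrable_add integrable_divide integrable_mult_right)
  have pt: "cmod (indicator ?A t *\<^sub>R g t) \<le> (cmod (g t))\<^sup>2 / (2*a) + a/2 * indicator ?A t" for t
  proof -
    have "cmod (g t) \<le> (cmod (g t))\<^sup>2 / (2*a) + a/2"
    proof -
      have "0 \<le> (cmod (g t) - a)\<^sup>2" by simp
      hence "2*a*cmod (g t) \<le> (cmod (g t))\<^sup>2 + a^2" by (simp add: power2_eq_square algebra_simps)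
      thus ?thesis using a by (simp add: field_simps power2_eq_square)
    qed
    thus ?thesis by (cases "t \<in> ?A") (auto simp: a less_imp_le)
  qed
  have "cmod (v y - v x) \<le> (\<integral>t. cmod (indicator ?A t *\<^sub>R g t) \<partial>lborel)"
    unfolding eq2 by (rule integral_norm_bound)
  also have "\<dots> \<le> (\<integral>t. (cmod (g t))\<^sup>2 / (2*a) + a/2 * indicator ?A t \<partial>lborel)"
    by (rule integral_mono'[OF ib]) (use pt a in \<open>auto intro: order_trans[OF norm_ge_zero]\<close>)
  also have "\<dots> = (\<integral>t. (cmod (g t))\<^sup>2 \<partial>lborel) / (2*a) + a/2 * (y - x)"
    using gi iA xy by (simp add: integrable_divide)
  also have "\<dots> \<le> K/(2*a) + a/2*(y-x)"
    using K a by (simp add: divide_right_mono)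
  finally show ?thesis .
qed

lemma count_bound:
  fixes f :: "real \<Rightarrow> real"
  assumes S: "finite S" and r: "0 < r" "r \<le> 1/2" and fi: "integrable lborel f"
    and f0: "\<And>t. 0 \<le> f t"
    and sep: "\<forall>a\<in>S. \<forall>b\<in>S. a \<noteq> b \<longrightarrow> 1 < \<bar>a - b\<bar>"
    and low: "\<And>s t. s \<in> S \<Longrightarrow> t \<in> {s-r..s+r} \<Longrightarrow> c \<le> f t"
  shows "real (card S) * (2*r*c) \<le> (\<integral>t. f t \<partial>lborel)"
proof -
  let ?I = "\<lambda>s. {s-r..s+r}"
  have mI: "measure lborel (?I s) = 2*r" for s
    using r by (simp add: measure_def)
  have iI: "integrable lborel (\<lambda>t. indicator (?I s) t :: real)" for s
    using r by (simp add: integrable_indicator_iff)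
  have ifI: "integrable lborel (\<lambda>t. f t * indicator (?I s) t)" for s
    by (rule integrable_real_mult_indicator) (auto simp: fi)
  have "real (card S) * (2*r*c) = (\<Sum>s\<in>S. (\<integral>t. c * indicator (?I s) t \<partial>lborel))"
    using iI mI by simp
  also have "\<dots> \<le> (\<Sum>s\<in>S. (\<integral>t. f t * indicator (?I s) t \<partial>lborel))"
  proof (rule sum_mono)
    fix s assume s: "s \<in> S"
    show "(\<integral>t. c * indicator (?I s) t \<partial>lborel) \<le> (\<integral>t. f t * indicator (?I s) t \<partial>lborel)"
      using iI ifI low[OF s] by (intro integral_mono) (auto simp: indicator_def)
  qed
  also have "\<dots> = (\<integral>t. f t * (\<Sum>s\<in>S. indicator (?I s) t) \<partial>lborel)"
    using ifI by (simp add: sum_distrib_left)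
  also have "\<dots> \<le> (\<integral>t. f t \<partial>lborel)"
  proof (rule integral_mono'[OF fi])
    fix t
    have "(\<Sum>s\<in>S. indicator (?I s) t :: real) \<le> 1"
    proof (cases "\<exists>s\<in>S. t \<in> ?I s")
      case True
      then obtain s where s: "s \<in> S" "t \<in> ?I s" by blast
      have z: "indicator (?I s') t = (0::real)" if "s' \<in> S - {s}" for s'
      proof -
        from that s sep have "1 < \<bar>s' - s\<bar>" by auto
        with s r show ?thesis by (auto simp: indicator_def abs_if split: if_splits)
      qed
      have "(\<Sum>s\<in>S. indicator (?I s) t :: real) = indicator (?I s) t + (\<Sum>s'\<in>S - {s}. indicator (?I s') t)"
        using S s by (simp add: sum.remove)
      also have "\<dots> = 1" using z s by simp
      finally show ?thesis by simp
    next
      case False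
      hence "\<And>s. s \<in> S \<Longrightarrow> indicator (?I s) t = (0::real)" by auto
      thus ?thesis by simp
    qed
    moreover have "0 \<le> (\<Sum>s\<in>S. indicator (?I s) t :: real)" by (simp add: sum_nonneg)
    ultimately show "f t * (\<Sum>s\<in>S. indicator (?I s) t) \<le> f t"
      using f0[of t] by (simp add: mult_left_le)
  qed (rule f0)
  finally show ?thesis .
qed

theorem lemma7:
  fixes E \<delta>0 :: real
  assumes "E > 0" and "0 < \<delta>0" and "\<delta>0 < 1"
  shows "\<exists>L0::nat. \<forall>v g. in_X1 v g \<and> GL_energy v g \<le> E \<longrightarrow>
           ((\<forall>x. \<bar>1 - cmod (v x)\<bar> < \<delta>0) \<or>
            (\<exists>xs::real list. 1 \<le> length xs \<and> length xs \<le> L0 \<and>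
               (\<forall>xi\<in>set xs. \<bar>1 - cmod (v xi)\<bar> \<ge> \<delta>0) \<and>
               (\<forall>x. (\<forall>xi\<in>set xs. x \<notin> {xi - 1..xi + 1}) \<longrightarrow> \<bar>1 - cmod (v x)\<bar> \<le> \<delta>0)))"
proof -
  have E: "E > 0" and d: "0 < \<delta>0" using assms by auto
  define r where "r = min (1/2) (\<delta>0\<^sup>2/(8*E))"
  define c where "c = \<delta>0\<^sup>2/4"
  define N where "N = nat \<lceil>4*E/(2*r*c)\<rceil>"
  have r0: "0 < r" and r1: "r \<le> 1/2" and r2: "r \<le> \<delta>0\<^sup>2/(8*E)"
    using E d by (auto simp: r_def)
  have c0: "0 < c" using d by (simp add: c_def)
  have rc: "0 < 2*r*c" using r0 c0 by simp
  show ?thesis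
  proof (intro exI[of _ N] allI impI)
    fix v g assume H: "in_X1 v g \<and> GL_energy v g \<le> E"
    hence X: "in_X1 v g" and En: "GL_energy v g \<le> E" by auto
    have gi: "integrable lborel (\<lambda>t. (cmod (g t))\<^sup>2)"
      and fi: "integrable lborel (\<lambda>x. (1 - (cmod (v x))\<^sup>2)\<^sup>2)"
      using X unfolding in_X1_def by auto
    have I1: "0 \<le> (\<integral>t. (cmod (g t))\<^sup>2 \<partial>lborel)" by (rule integral_nonneg_AE) auto
    have I2: "0 \<le> (\<integral>x. (1 - (cmod (v x))\<^sup>2)\<^sup>2 \<partial>lborel)" by (rule integral_nonneg_AE) auto
    have K: "(\<integral>t. (cmod (g t))\<^sup>2 \<partial>lborel) \<le> 2*E"
      using En I2 unfolding GL_energy_def by linarith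
    have F: "(\<integral>x. (1 - (cmod (v x))\<^sup>2)\<^sup>2 \<partial>lborel) \<le> 4*E"
      using En I1 unfolding GL_energy_def by linarith
    define a where "a = 4*E/\<delta>0"
    have a0: "a > 0" using E d by (simp add: a_def)
    have mod1: "cmod (v y - v x) \<le> \<delta>0/2" if "x \<le> y" "y - x \<le> r" for x y
    proof -
      have "cmod (v y - v x) \<le> 2*E/(2*a) + a/2*(y-x)"
        by (rule cont_bound[OF X K a0 that(1)])
      also have "2*E/(2*a) = \<delta>0/4" using E d by (simp add: a_def field_simps)
      also have "a/2*(y-x) \<le> a/2 * (\<delta>0\<^sup>2/(8*E))"
        using that r2 a0 by (intro mult_left_mono) auto
      also have "a/2 * (\<delta>0\<^sup>2/(8*E)) = \<delta>0/4" using E d by (simp add: a_def field_simps power2_eq_square)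
      finally show ?thesis by simp
    qed
    have mod2: "cmod (v t - v x) \<le> \<delta>0/2" if "\<bar>t - x\<bar> \<le> r" for x t
    proof (cases "x \<le> t")
      case True thus ?thesis using mod1 that by auto
    next
      case False thus ?thesis using mod1[of t x] that by (auto simp: norm_minus_commute)
    qed
    have near: "c \<le> (1 - (cmod (v t))\<^sup>2)\<^sup>2" if b: "\<delta>0 \<le> \<bar>1 - cmod (v x)\<bar>" and tx: "\<bar>t - x\<bar> \<le> r" for x t
    proof -
      have "\<bar>cmod (v t) - cmod (v x)\<bar> \<le> cmod (v t - v x)" by (rule norm_triangle_ineq3)
      with mod2[OF tx] have "\<bar>cmod (v t) - cmod (v x)\<bar> \<le> \<delta>0/2" by linarith
      with b have h: "\<delta>0/2 \<le> \<bar>1 - cmod (v t)\<bar>" by linarith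
      have "(\<delta>0/2)\<^sup>2 \<le> (\<bar>1 - cmod (v t)\<bar>)\<^sup>2" using h d by (intro power_mono) auto
      also have "\<dots> = (1 - cmod (v t))\<^sup>2" by simp
      also have "\<dots> \<le> (1 - cmod (v t))\<^sup>2 * (1 + cmod (v t))\<^sup>2"
      proof -
        have "1 \<le> (1 + cmod (v t))\<^sup>2" by (metis one_le_power le_add_same_cancel1 norm_ge_zero)
        thus ?thesis by (simp add: mult_le_cancel_left1)
      qed
      also have "\<dots> = (1 - (cmod (v t))\<^sup>2)\<^sup>2" by (simp add: power2_eq_square algebra_simps)
      finally show ?thesis by (simp add: c_def power2_eq_square)
    qed
    define B where "B = {x. \<delta>0 \<le> \<bar>1 - cmod (v x)\<bar>}"
    define P where "P = (\<lambda>S. finite S \<and> S \<subseteq> B \<and> (\<forall>a\<in>S. \<forall>b\<in>S. a \<noteq> b \<longrightarrow> 1 < \<bar>a - b\<bar>))"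
    have cardb: "card S < N + 1" if "P S" for S
    proof -
      have "real (card S) * (2*r*c) \<le> (\<integral>t. (1 - (cmod (v t))\<^sup>2)\<^sup>2 \<partial>lborel)"
      proof (rule count_bound[OF _ r0 r1 fi])
        show "finite S" using that by (simp add: P_def)
        show "\<forall>a\<in>S. \<forall>b\<in>S. a \<noteq> b \<longrightarrow> 1 < \<bar>a - b\<bar>" using that by (simp add: P_def)
        fix s t assume "s \<in> S" "t \<in> {s-r..s+r}"
        moreover have "s \<in> B" using that \<open>s \<in> S\<close> by (auto simp: P_def)
        ultimately show "c \<le> (1 - (cmod (v t))\<^sup>2)\<^sup>2" using near[of s t] by (auto simp: B_def abs_le_iff)
      qed auto
      with F have "real (card S) * (2*r*c) \<le> 4*E" by linarith
      hence "real (card S) \<le> 4*E/(2*r*c)" using rc by (simp add: field_simps)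
      also have "\<dots> \<le> real N" unfolding N_def by linarith
      finally show ?thesis by simp
    qed
    show "(\<forall>x. \<bar>1 - cmod (v x)\<bar> < \<delta>0) \<or>
            (\<exists>xs::real list. 1 \<le> length xs \<and> length xs \<le> N \<and>
               (\<forall>xi\<in>set xs. \<bar>1 - cmod (v xi)\<bar> \<ge> \<delta>0) \<and>
               (\<forall>x. (\<forall>xi\<in>set xs. x \<notin> {xi - 1..xi + 1}) \<longrightarrow> \<bar>1 - cmod (v x)\<bar> \<le> \<delta>0))"
    proof (cases "\<forall>x. \<bar>1 - cmod (v x)\<bar> < \<delta>0")
      case True thus ?thesis by simp
    next
      case False
      then obtain x0 where x0: "x0 \<in> B" by (auto simp: B_def not_less)
      have "P {}" by (simp add: P_def)
      from ex_has_greatest_nat[of P "{}" card "N+1", OF this] cardb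
      obtain S where PS: "P S" and mx: "\<And>S'. P S' \<Longrightarrow> card S' \<le> card S" by blast
      have cov: "\<exists>s\<in>S. \<bar>x - s\<bar> \<le> 1" if "x \<in> B" for x
      proof (rule ccontr)
        assume "\<not> ?thesis"
        hence far: "\<forall>s\<in>S. 1 < \<bar>x - s\<bar>" by auto
        hence xS: "x \<notin> S" by fastforce
        have "P (insert x S)" using PS far that unfolding P_def
          by (auto simp: abs_minus_commute)
        from mx[OF this] PS xS show False by (simp add: P_def)
      qed
      have fS: "finite S" using PS by (simp add: P_def)
      define xs where "xs = sorted_list_of_set S"
      have sx: "set xs = S" and lx: "length xs = card S" using fS by (simp_all add: xs_def)
      have "S \<noteq> {}" using cov[OF x0] by auto
      hence "1 \<le> length xs" using fS lx by (simp add: Suc_le_eq card_gt_0_iff)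
      moreover have "length xs \<le> N" using cardb[OF PS] lx by simp
      moreover have "\<forall>xi\<in>set xs. \<bar>1 - cmod (v xi)\<bar> \<ge> \<delta>0" using PS sx by (auto simp: P_def B_def)
      moreover have "\<forall>x. (\<forall>xi\<in>set xs. x \<notin> {xi - 1..xi + 1}) \<longrightarrow> \<bar>1 - cmod (v x)\<bar> \<le> \<delta>0"
      proof (intro allI impI)
        fix x assume nx: "\<forall>xi\<in>set xs. x \<notin> {xi - 1..xi + 1}"
        show "\<bar>1 - cmod (v x)\<bar> \<le> \<delta>0"
        proof (rule ccontr)
          assume "\<not> ?thesis"
          hence "x \<in> B" by (auto simp: B_def)
          from cov[OF this] obtain s where "s \<in> S" "\<bar>x - s\<bar> \<le> 1" by blast
          with nx sx show False by (auto simp: abs_le_iff)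
        qed
      qed
      ultimately show ?thesis by blast
    qed
  qed
qed

end
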